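(* Define, for $n'\in\mathbb{N}_+$ and $n\in\{0,\dots,n'\}$, $\gamma_{n,n'}=\Big(\sum_{j=0}^{n}\binom{n'}{j}\Big){\rm e}_{n'}$. Then the collection $(\gamma_{n,n'})_{n'\in\mathbb{N}_+,n\in\{0,\dots,n'\}}$ belongs to $\Gamma$ (i.e. satisfies the bound condition).
   Context: $\sigma(x)=\max(0,x)$; $\mathrm{RL}(n,n')$ ($n,n'\in\mathbb{N}_+$) is the set of maps $h:\mathbb{R}^n\to\mathbb{R}^{n'}$, $h(x)_i=\sigma(\langle x,w_i\rangle+b_i)$ for some $W\in\mathbb{R}^{n'\times n}$ with rows $w_i$, $b\in\mathbb{R}^{n'}$; convention: $\mathrm{RL}(0,n')$ are constant maps $\{0\}\to\mathbb{R}^{n'}$ with $\mathcal{H}_{n'}(\mathcal{S}_h)={\rm e}_0$. $S_h(x)_i=1$ iff $\langle x,w_i\rangle+b_i>0$ else $0$; $\mathcal{S}_h=\{S_h(x):x\in\mathbb{R}^n\}$; $|s|=\sum_is_i$. $V$: sequences $(v_j)_{j\in\mathbb{N}}$ of nonnegative integers with finite sum; ${\rm e}_i$ has $({\rm e}_i)_j=\delta_{ij}$; $v\preceq w$ iff $\sum_{j\ge J}v_j\le\sum_{j\ge J}w_j$ for all $J\in\mathbb{N}$; for finite families, $\max_i(v^{(i)})_J=\max_i\sum_{j\ge J}v^{(i)}_j-\max_i\sum_{j\ge J+1}v^{(i)}_j$. $\mathcal{H}_{n'}(\mathcal{S})=(|\{s\in\mathcal{S}:|s|=j\}|)_j$.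 $\Gamma$ (bound condition): families $(\gamma_{n,n'})_{n'\in\mathbb{N}_+,n\in\{0,\dots,n'\}}$ in $V$ with (i) $\max\{\mathcal{H}_{n'}(\mathcal{S}_h):h\in\mathrm{RL}(n,n')\}\preceq\gamma_{n,n'}$ for all $n'\in\mathbb{N}_+$, $n\in\{0,\dots,n'\}$, and (ii) $n\le\tilde n\le n'\Rightarrow\gamma_{n,n'}\preceq\gamma_{\tilde n,n'}$. *)

theory Defs
  imports Complex_Main
begin

text \<open>Vectors in R^n are modelled as functions nat => real that vanish at indices >= n.
  Elements of V are sequences nat => nat with finite support.\<close>

definition inV :: "(nat \<Rightarrow> nat) \<Rightarrow> bool" where
  "inV v \<longleftrightarrow> finite {j. v j \<noteq> 0}"

definition unitV :: "nat \<Rightarrow> nat \<Rightarrow> nat" where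
  "unitV i = (\<lambda>j. if j = i then 1 else 0)"

definition tailV :: "(nat \<Rightarrow> nat) \<Rightarrow> nat \<Rightarrow> nat" where
  "tailV v J = (\<Sum>j\<in>{j. J \<le> j \<and> v j \<noteq> 0}. v j)"

definition precV :: "(nat \<Rightarrow> nat) \<Rightarrow> (nat \<Rightarrow> nat) \<Rightarrow> bool" where
  "precV v w \<longleftrightarrow> (\<forall>J. tailV v J \<le> tailV w J)"

text \<open>Maximum of a finite (nonempty) family of elements of V.\<close>
definition maxV :: "(nat \<Rightarrow> nat) set \<Rightarrow> nat \<Rightarrow> nat" where
  "maxV F = (\<lambda>J. Max ((\<lambda>v. tailV v J) ` F) - Max ((\<lambda>v. tailV v (Suc J)) ` F))"

definition relu_layer :: "nat \<Rightarrow> nat \<Rightarrow> (nat \<Rightarrow> nat \<Rightarrow> real) \<Rightarrow> (nat \<Rightarrow> real)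
    \<Rightarrow> (nat \<Rightarrow> real) \<Rightarrow> (nat \<Rightarrow> real)" where
  "relu_layer n n' W b = (\<lambda>x i. if i < n' then max 0 ((\<Sum>k<n. x k * W i k) + b i) else 0)"

definition RL :: "nat \<Rightarrow> nat \<Rightarrow> ((nat \<Rightarrow> real) \<Rightarrow> (nat \<Rightarrow> real)) set" where
  "RL n n' = {relu_layer n n' W b | W b. True}"

definition act_pattern :: "nat \<Rightarrow> ((nat \<Rightarrow> real) \<Rightarrow> (nat \<Rightarrow> real)) \<Rightarrow> (nat \<Rightarrow> real) \<Rightarrow> nat \<Rightarrow> nat" where
  "act_pattern n' h x = (\<lambda>i. if i < n' \<and> h x i > 0 then 1 else 0)"

definition act_patterns :: "nat \<Rightarrow> nat \<Rightarrow> ((nat \<Rightarrow> real) \<Rightarrow> (nat \<Rightarrow> real)) \<Rightarrow> (nat \<Rightarrow> nat) set" where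
  "act_patterns n n' h = {act_pattern n' h x | x. \<forall>k\<ge>n. x k = 0}"

definition histo :: "nat \<Rightarrow> (nat \<Rightarrow> nat) set \<Rightarrow> nat \<Rightarrow> nat" where
  "histo n' S = (\<lambda>j. card {s\<in>S. (\<Sum>i<n'. s i) = j})"

definition histos :: "nat \<Rightarrow> nat \<Rightarrow> (nat \<Rightarrow> nat) set" where
  "histos n n' = (if n = 0 then {unitV 0} else {histo n' (act_patterns n n' h) | h. h \<in> RL n n'})"

definition in_Gamma :: "(nat \<Rightarrow> nat \<Rightarrow> nat \<Rightarrow> nat) \<Rightarrow> bool" where
  "in_Gamma \<gamma> \<longleftrightarrow>
     (\<forall>n' n. 1 \<le> n' \<and> n \<le> n' \<longrightarrow> inV (\<gamma> n n')) \<and>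
     (\<forall>n' n. 1 \<le> n' \<and> n \<le> n' \<longrightarrow> precV (maxV (histos n n')) (\<gamma> n n')) \<and>
     (\<forall>n' n m. 1 \<le> n' \<and> n \<le> m \<and> m \<le> n' \<longrightarrow> precV (\<gamma> n n') (\<gamma> m n'))"

end

theory Submission
  imports Defs
begin

definition pat :: "nat set \<Rightarrow> nat \<Rightarrow> (nat \<Rightarrow> nat \<Rightarrow> real) \<Rightarrow> (nat \<Rightarrow> real) \<Rightarrow> (nat \<Rightarrow> real) \<Rightarrow> nat \<Rightarrow> nat" where
  "pat K m W b x = (\<lambda>i. if i < m \<and> 0 < (\<Sum>k\<in>K. x k * W i k) + b i then 1 else 0)"

definition pats :: "nat set \<Rightarrow> nat \<Rightarrow> (nat \<Rightarrow> nat \<Rightarrow> real) \<Rightarrow> (nat \<Rightarrow> real) \<Rightarrow> (nat \<Rightarrow> nat) set" where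
  "pats K m W b = range (pat K m W b)"

lemma pats_sub: "pats K m W b \<subseteq> (\<lambda>S i. if i \<in> S then 1 else 0) ` Pow {..<m}"
proof
  fix p assume "p \<in> pats K m W b"
  then obtain x where p: "p = pat K m W b x" by (auto simp: pats_def)
  let ?S = "{i. i < m \<and> 0 < (\<Sum>k\<in>K. x k * W i k) + b i}"
  have "p = (\<lambda>i. if i \<in> ?S then 1 else 0)" by (auto simp: p pat_def)
  moreover have "?S \<in> Pow {..<m}" by auto
  ultimately show "p \<in> (\<lambda>S i. if i \<in> S then 1 else 0) ` Pow {..<m}" by blast
qed

lemma pats_finite: "finite (pats K m W b)"
  by (rule finite_subset[OF pats_sub]) auto

lemma aff_comb:
  "(\<Sum>k\<in>K. ((1-t)*x k + t*y k) * w k) + (c::real)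
     = (1-t)*((\<Sum>k\<in>K. x k * w k) + c) + t*((\<Sum>k\<in>K. y k * w k) + c)"
proof -
  have "(\<Sum>k\<in>K. ((1-t)*x k + t*y k) * w k) = (\<Sum>k\<in>K. (1-t)*(x k * w k) + t*(y k * w k))"
    by (rule sum.cong) (auto simp: algebra_simps)
  also have "\<dots> = (1-t)*(\<Sum>k\<in>K. x k * w k) + t*(\<Sum>k\<in>K. y k * w k)"
    by (simp add: sum.distrib sum_distrib_left)
  finally show ?thesis by (simp add: algebra_simps)
qed

lemma binom_sum_step:
  "(\<Sum>i\<le>Suc e. Suc m choose i) = (\<Sum>i\<le>Suc e. m choose i) + (\<Sum>i\<le>e. m choose i)"
proof (induction e)
  case 0 then show ?case by simp
next
  case (Suc e)
  have "(\<Sum>i\<le>Suc (Suc e). Suc m choose i) = (\<Sum>i\<le>Suc e. Suc m choose i) + (Suc m choose Suc (Suc e))" by simp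
  also have "\<dots> = (\<Sum>i\<le>Suc e. m choose i) + (\<Sum>i\<le>e. m choose i) + (m choose Suc e) + (m choose Suc (Suc e))"
    using Suc by (simp add: binomial_Suc_Suc)
  finally show ?case by simp
qed

lemma binom_sum_mono: "(\<Sum>i\<le>c. m choose i) \<le> (\<Sum>i\<le>c. Suc m choose i)"
proof (rule sum_mono)
  fix i show "m choose i \<le> Suc m choose i" by (cases i) (auto simp: binomial_Suc_Suc)
qed

lemma convex_step:
  fixes x y :: "nat \<Rightarrow> real" and K :: "nat set" and W :: "nat \<Rightarrow> nat \<Rightarrow> real"
    and b :: "nat \<Rightarrow> real" and m :: nat
  defines "f \<equiv> \<lambda>z. (\<Sum>k\<in>K. z k * W m k) + b m"
  assumes fx: "f x \<le> 0" and fy: "0 < f y" and eq: "pat K m W b x = pat K m W b y"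
  shows "\<exists>z. f z = 0 \<and> pat K m W b z = pat K m W b x"
proof -
  define t where "t = - f x / (f y - f x)"
  have d: "f y - f x > 0" using fx fy by linarith
  have "f x / (f y - f x) \<le> 0" by (rule divide_nonpos_pos) (use fx d in auto)
  then have t0: "0 \<le> t" unfolding t_def by simp
  have t1: "t < 1" unfolding t_def by (subst divide_less_eq_1_pos) (use d fy in auto)
  define z where "z = (\<lambda>k. (1-t)*x k + t*y k)"
  have fz: "f z = (1-t) * f x + t * f y" unfolding f_def z_def by (rule aff_comb)
  have "f z = 0"
  proof -
    have "(1-t) * f x + t * f y = ((f y - f x) * f x + (- f x) * (f y - f x)) / (f y - f x) + 0"
      unfolding t_def using d by (simp add: field_simps)
    also have "\<dots> = 0" by (simp add: algebra_simps)
    finally show ?thesis using fz by simp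
  qed
  moreover have "pat K m W b z = pat K m W b x"
  proof
    fix i
    let ?g = "\<lambda>z. (\<Sum>k\<in>K. z k * W i k) + b i"
    have gz: "?g z = (1-t) * ?g x + t * ?g y" unfolding z_def by (rule aff_comb)
    show "pat K m W b z i = pat K m W b x i"
    proof (cases "i < m")
      case True
      have iff: "0 < ?g x \<longleftrightarrow> 0 < ?g y" using fun_cong[OF eq, of i] True
        by (auto simp: pat_def split: if_splits)
      have "0 < ?g z \<longleftrightarrow> 0 < ?g x"
      proof (cases "0 < ?g x")
        case True
        with iff have "0 < ?g y" by simp
        have "0 < (1-t) * ?g x" using True t1 by simp
        moreover have "0 \<le> t * ?g y" using t0 \<open>0 < ?g y\<close> by simp
        ultimately show ?thesis using gz True by linarith
      next
        case False
        with iff have "?g y \<le> 0" by simp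
        have "(1-t) * ?g x \<le> 0" using False t1 by (simp add: mult_nonneg_nonpos)
        moreover have "t * ?g y \<le> 0" using t0 \<open>?g y \<le> 0\<close> by (simp add: mult_nonneg_nonpos)
        ultimately show ?thesis using gz False by linarith
      qed
      then show ?thesis by (simp add: pat_def)
    qed (simp add: pat_def)
  qed
  ultimately show ?thesis by blast
qed

lemma hyperplane_step:
  fixes z :: "nat \<Rightarrow> real"
  assumes fin: "finite K" and k0: "k0 \<in> K" and a0: "W m k0 \<noteq> 0"
    and fz: "(\<Sum>k\<in>K. z k * W m k) + b m = 0"
  shows "(\<Sum>k\<in>K. z k * W i k) + b i
    = (\<Sum>k\<in>K-{k0}. z k * (W i k - W m k * W i k0 / W m k0)) + (b i - b m * W i k0 / W m k0)"
proof -
  let ?S1 = "\<Sum>k\<in>K-{k0}. z k * W i k"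
  let ?S2 = "\<Sum>k\<in>K-{k0}. z k * W m k"
  have s1: "(\<Sum>k\<in>K. z k * W i k) = z k0 * W i k0 + ?S1" using fin k0 by (simp add: sum.remove)
  have s2: "(\<Sum>k\<in>K. z k * W m k) = z k0 * W m k0 + ?S2" using fin k0 by (simp add: sum.remove)
  have zk0: "z k0 = - (?S2 + b m) / W m k0" using fz s2 a0 by (simp add: field_simps)
  have s3: "(\<Sum>k\<in>K-{k0}. z k * (W i k - W m k * W i k0 / W m k0)) = ?S1 - ?S2 * W i k0 / W m k0"
  proof -
    have "(\<Sum>k\<in>K-{k0}. z k * (W i k - W m k * W i k0 / W m k0))
       = (\<Sum>k\<in>K-{k0}. z k * W i k - (z k * W m k) * (W i k0 / W m k0))"
      by (rule sum.cong) (auto simp: algebra_simps)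
    also have "\<dots> = ?S1 - ?S2 * (W i k0 / W m k0)" by (simp only: sum_subtractf sum_distrib_right)
    finally show ?thesis by simp
  qed
  show ?thesis unfolding s1 s3 zk0 using a0 by (simp add: field_simps)
qed

lemma pats_card: "finite K \<Longrightarrow> card (pats K m W b) \<le> (\<Sum>i\<le>card K. m choose i)"
proof (induction m arbitrary: K W b)
  case 0
  have "pats K 0 W b = {\<lambda>i. 0}" by (auto simp: pats_def pat_def)
  then show ?case by (simp add: sum.atMost_shift)
next
  case (Suc m)
  define f where "f = (\<lambda>z. (\<Sum>k\<in>K. z k * W m k) + b m)"
  define P0 where "P0 = pat K m W b ` {x. f x \<le> 0}"
  define Q1 where "Q1 = pat K m W b ` {x. 0 < f x}"
  let ?P = "pats K (Suc m) W b"
  let ?Q = "pats K m W b"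
  have P_eq: "?P = pat K (Suc m) W b ` {x. f x \<le> 0} \<union> pat K (Suc m) W b ` {x. 0 < f x}"
    unfolding pats_def by force
  have A0: "pat K (Suc m) W b ` {x. f x \<le> 0} = P0"
  proof -
    have "pat K (Suc m) W b x = pat K m W b x" if "f x \<le> 0" for x
      using that by (intro ext) (auto simp: pat_def f_def less_Suc_eq)
    then show ?thesis unfolding P0_def by (auto simp: image_def)
  qed
  have A1: "pat K (Suc m) W b ` {x. 0 < f x} = (\<lambda>q. q(m:=1)) ` Q1"
  proof -
    have "pat K (Suc m) W b x = (pat K m W b x)(m:=1)" if "0 < f x" for x
      using that by (intro ext) (auto simp: pat_def f_def less_Suc_eq)
    then show ?thesis unfolding Q1_def by (auto simp: image_def)
  qed
  have QU: "?Q = P0 \<union> Q1" unfolding pats_def P0_def Q1_def by force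
  have finQ: "finite ?Q" by (rule pats_finite)
  have fP0: "finite P0" and fQ1: "finite Q1" using finQ QU by auto
  have "card ?P \<le> card P0 + card ((\<lambda>q. q(m:=1)) ` Q1)"
    unfolding P_eq A0 A1 by (rule card_Un_le)
  also have "\<dots> \<le> card P0 + card Q1" using card_image_le[OF fQ1] by simp
  also have "\<dots> = card ?Q + card (P0 \<inter> Q1)" unfolding QU using card_Un_Int[OF fP0 fQ1] by simp
  finally have cP: "card ?P \<le> card ?Q + card (P0 \<inter> Q1)" .
  have IHQ: "card ?Q \<le> (\<Sum>i\<le>card K. m choose i)" using Suc by blast
  have Bsub: "P0 \<inter> Q1 \<subseteq> pat K m W b ` {z. f z = 0}"
  proof
    fix q assume "q \<in> P0 \<inter> Q1"
    then obtain x y where x: "f x \<le> 0" "q = pat K m W b x" and y: "0 < f y" "q = pat K m W b y"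
      unfolding P0_def Q1_def by blast
    have "\<exists>z. f z = 0 \<and> pat K m W b z = pat K m W b x"
      using convex_step[where x=x and y=y and K=K and W=W and b=b and m=m] x y unfolding f_def by metis
    then obtain z where "f z = 0" "pat K m W b z = pat K m W b x" by blast
    then have "q = pat K m W b z" "z \<in> {z. f z = 0}" using x by auto
    then show "q \<in> pat K m W b ` {z. f z = 0}" by blast
  qed
  show ?case
  proof (cases "\<forall>k\<in>K. W m k = 0")
    case True
    then have "f x = b m" for x unfolding f_def by simp
    then have "P0 = {} \<or> Q1 = {}" unfolding P0_def Q1_def by auto
    then have "card ?P \<le> card ?Q" using cP by auto
    then show ?thesis using IHQ binom_sum_mono[where c="card K" and m=m] by linarith
  next
    case False
    then obtain k0 where k0: "k0 \<in> K" "W m k0 \<noteq> 0" by blast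
    define W' where "W' = (\<lambda>i k. W i k - W m k * W i k0 / W m k0)"
    define b' where "b' = (\<lambda>i. b i - b m * W i k0 / W m k0)"
    have "pat K m W b ` {z. f z = 0} \<subseteq> pats (K - {k0}) m W' b'"
    proof
      fix q assume "q \<in> pat K m W b ` {z. f z = 0}"
      then obtain z where z: "f z = 0" "q = pat K m W b z" by blast
      have hz: "(\<Sum>k\<in>K. z k * W m k) + b m = 0" using z(1) unfolding f_def .
      have h: "(\<Sum>k\<in>K. z k * W i k) + b i
          = (\<Sum>k\<in>K-{k0}. z k * (W i k - W m k * W i k0 / W m k0)) + (b i - b m * W i k0 / W m k0)" for i
        using Suc.prems k0 hz by (rule hyperplane_step)
      have eqi: "(\<Sum>k\<in>K. z k * W i k) + b i = (\<Sum>k\<in>K-{k0}. z k * W' i k) + b' i" for i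
        unfolding W'_def b'_def by (rule h)
      have "pat K m W b z = pat (K - {k0}) m W' b' z"
        unfolding pat_def by (intro ext) (simp only: eqi)
      then show "q \<in> pats (K - {k0}) m W' b'" using z by (simp add: pats_def)
    qed
    then have "card (P0 \<inter> Q1) \<le> card (pats (K - {k0}) m W' b')"
      using Bsub by (intro card_mono[OF pats_finite]) blast
    also have "\<dots> \<le> (\<Sum>i\<le>card (K - {k0}). m choose i)" using Suc by simp
    finally have cB: "card (P0 \<inter> Q1) \<le> (\<Sum>i\<le>card K - 1. m choose i)"
      using Suc.prems k0 by simp
    obtain e where e: "card K = Suc e" using Suc.prems k0 card_gt_0_iff
      by (metis equals0D gr0_implies_Suc)
    show ?thesis using cP IHQ cB binom_sum_step[where e=e and m=m] e by simp
  qed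
qed

lemma act_patterns_eq: "act_patterns n n' (relu_layer n n' W b) = pats {..<n} n' W b"
proof -
  have ap: "act_pattern n' (relu_layer n n' W b) x = pat {..<n} n' W b x" for x
    by (intro ext) (simp add: act_pattern_def relu_layer_def pat_def less_max_iff_disj)
  show ?thesis
  proof
    show "act_patterns n n' (relu_layer n n' W b) \<subseteq> pats {..<n} n' W b"
      by (auto simp: act_patterns_def pats_def ap)
  next
    show "pats {..<n} n' W b \<subseteq> act_patterns n n' (relu_layer n n' W b)"
    proof
      fix p assume "p \<in> pats {..<n} n' W b"
      then obtain x where p: "p = pat {..<n} n' W b x" by (auto simp: pats_def)
      define x' where "x' = (\<lambda>k. if k < n then x k else 0)"
      have "pat {..<n} n' W b x' = pat {..<n} n' W b x"
        unfolding pat_def x'_def by (intro ext) simp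
      moreover have "\<forall>k\<ge>n. x' k = 0" by (simp add: x'_def)
      ultimately have "p = act_pattern n' (relu_layer n n' W b) x' \<and> (\<forall>k\<ge>n. x' k = 0)"
        using ap[of x'] p by simp
      then show "p \<in> act_patterns n n' (relu_layer n n' W b)"
        unfolding act_patterns_def by blast
    qed
  qed
qed

lemma pat_sum_le: "(\<Sum>i<n'. pat K n' W b x i) \<le> n'"
proof -
  have "(\<Sum>i<n'. pat K n' W b x i) \<le> (\<Sum>i<n'. (1::nat))"
    by (rule sum_mono) (simp add: pat_def)
  then show ?thesis by simp
qed

lemma histo_zero:
  assumes "n' < j" shows "histo n' (pats K n' W b) j = 0"
proof -
  have ne: "(\<Sum>i<n'. s i) \<noteq> j" if hs: "s \<in> pats K n' W b" for s
  proof -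
    obtain x where "s = pat K n' W b x" using hs unfolding pats_def by blast
    then show ?thesis using pat_sum_le[where n'=n' and K=K and W=W and b=b and x=x] assms by simp
  qed
  have "{s \<in> pats K n' W b. (\<Sum>i<n'. s i) = j} = {}" using ne by blast
  then show ?thesis unfolding histo_def by (metis card.empty)
qed

lemma tail_histo_le:
  assumes fS: "finite S"
  shows "tailV (histo n' S) J \<le> card S"
proof -
  let ?A = "{j. J \<le> j \<and> histo n' S j \<noteq> 0}"
  show ?thesis
  proof (cases "finite ?A")
    case True
    have "tailV (histo n' S) J = (\<Sum>j\<in>?A. card {s\<in>S. (\<Sum>i<n'. s i) = j})"
      by (simp add: tailV_def histo_def)
    also have "\<dots> = card (\<Union>j\<in>?A. {s\<in>S. (\<Sum>i<n'. s i) = j})"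
      by (rule card_UN_disjoint[symmetric]) (use True fS in auto)
    also have "\<dots> \<le> card S" by (rule card_mono[OF fS]) auto
    finally show ?thesis .
  next
    case False
    then show ?thesis by (simp add: tailV_def)
  qed
qed

lemma tele:
  fixes M :: "nat \<Rightarrow> nat"
  assumes "\<And>j. M (Suc j) \<le> M j"
  shows "(\<Sum>j\<in>{J..<J+L}. (M j - M (Suc j))) + M (J+L) = M J"
proof (induction L)
  case 0 then show ?case by simp
next
  case (Suc L)
  have "(\<Sum>j\<in>{J..<J+Suc L}. (M j - M (Suc j))) = (\<Sum>j\<in>{J..<J+L}. (M j - M (Suc j))) + (M (J+L) - M (Suc (J+L)))"
    by simp
  moreover have "M (Suc (J+L)) \<le> M (J+L)" by (rule assms)
  ultimately show ?case using Suc by simp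
qed

lemma maxV_bound:
  assumes ne: "F \<noteq> {}" and sup: "\<forall>v\<in>F. \<forall>j>N. v j = 0" and bd: "\<forall>v\<in>F. \<forall>j. tailV v j \<le> C"
  shows "tailV (maxV F) J \<le> (if J \<le> N then C else 0)"
proof -
  define M where "M = (\<lambda>j. Max ((\<lambda>v. tailV v j) ` F))"
  have mx: "maxV F = (\<lambda>j. M j - M (Suc j))" unfolding maxV_def M_def by simp
  have fin: "finite ((\<lambda>v. tailV v j) ` F)" for j
    by (rule finite_subset[of _ "{..C}"]) (use bd in auto)
  have ge: "tailV v j \<le> M j" if "v \<in> F" for v j
    unfolding M_def using fin that by (intro Max_ge) auto
  have MC: "M j \<le> C" for j
    unfolding M_def using fin ne bd by (subst Max_le_iff) auto
  have finsupp: "finite {j'. j \<le> j' \<and> v j' \<noteq> 0}" if "v \<in> F" for v j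
  proof (rule finite_subset[of _ "{..N}"])
    show "{j'. j \<le> j' \<and> v j' \<noteq> 0} \<subseteq> {..N}"
    proof
      fix j' assume j': "j' \<in> {j'. j \<le> j' \<and> v j' \<noteq> 0}"
      show "j' \<in> {..N}"
      proof (rule ccontr)
        assume "j' \<notin> {..N}"
        then have "N < j'" by simp
        then have "v j' = 0" using sup that by blast
        then show False using j' by simp
      qed
    qed
  qed simp
  have tmono: "tailV v (Suc j) \<le> tailV v j" if "v \<in> F" for v j
    unfolding tailV_def by (rule sum_mono2[OF finsupp[OF that]]) auto
  have anti: "M (Suc j) \<le> M j" for j
  proof -
    have "\<forall>v\<in>F. tailV v (Suc j) \<le> M j" using tmono ge order.trans by blast
    then have "Max ((\<lambda>v. tailV v (Suc j)) ` F) \<le> M j" using fin ne by (subst Max_le_iff) auto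
    then show ?thesis by (simp add: M_def)
  qed
  have M0: "M j = 0" if "N < j" for j
  proof -
    have "tailV v j = 0" if "v \<in> F" for v
    proof -
      have "{j'. j \<le> j' \<and> v j' \<noteq> 0} = {}" using sup that \<open>N < j\<close> by force
      then show ?thesis by (simp add: tailV_def)
    qed
    then have "(\<lambda>v. tailV v j) ` F = {0}" using ne by auto
    then show ?thesis by (simp add: M_def)
  qed
  show ?thesis
  proof (cases "J \<le> N")
    case False
    have "{j. J \<le> j \<and> maxV F j \<noteq> 0} = {}" using False M0 by (auto simp: mx)
    then show ?thesis using False by (simp add: tailV_def)
  next
    case True
    have sub: "{j. J \<le> j \<and> maxV F j \<noteq> 0} \<subseteq> {J..<J + (Suc N - J)}"
    proof
      fix j assume j: "j \<in> {j. J \<le> j \<and> maxV F j \<noteq> 0}"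
      have "j \<le> N"
      proof (rule ccontr)
        assume "\<not> j \<le> N"
        then have "M j = 0" "M (Suc j) = 0" using M0 by auto
        then show False using j by (simp add: mx)
      qed
      then show "j \<in> {J..<J + (Suc N - J)}" using j True by auto
    qed
    have "tailV (maxV F) J \<le> (\<Sum>j\<in>{J..<J + (Suc N - J)}. maxV F j)"
      unfolding tailV_def by (rule sum_mono2[OF _ sub]) auto
    also have "\<dots> = (\<Sum>j\<in>{J..<J + (Suc N - J)}. (M j - M (Suc j)))" by (simp add: mx)
    also have "\<dots> \<le> M J" using tele[of M J "Suc N - J", OF anti] by linarith
    also have "\<dots> \<le> C" by (rule MC)
    finally show ?thesis using True by simp
  qed
qed

lemma tail_gamma: "tailV (\<lambda>j. c * unitV n' j) J = (if J \<le> n' then c else 0)"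
proof -
  have "{j. J \<le> j \<and> c * unitV n' j \<noteq> 0} = (if J \<le> n' \<and> c \<noteq> 0 then {n'} else {})"
    by (auto simp: unitV_def)
  then show ?thesis by (auto simp: tailV_def unitV_def)
qed

theorem mainTheorem8:
  shows "in_Gamma (\<lambda>n n' j. (\<Sum>i\<le>n. n' choose i) * unitV n' j)"
proof -
  let ?C = "\<lambda>n n'. (\<Sum>i\<le>n. n' choose i)"
  have c1: "inV (\<lambda>j. ?C n n' * unitV n' j)" for n n'
    unfolding inV_def by (rule finite_subset[of _ "{n'}"]) (auto simp: unitV_def)
  have c2: "precV (maxV (histos n n')) (\<lambda>j. ?C n n' * unitV n' j)" if "1 \<le> n'" "n \<le> n'" for n n'
  proof -
    have C1: "1 \<le> ?C n n'"
    proof -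
      have "(n' choose 0) \<le> ?C n n'" by (rule member_le_sum) auto
      then show ?thesis by simp
    qed
    have ne: "histos n n' \<noteq> {}"
      unfolding histos_def RL_def by auto
    have props: "(\<forall>j>n'. v j = 0) \<and> (\<forall>j. tailV v j \<le> ?C n n')" if v: "v \<in> histos n n'" for v
    proof (cases "n = 0")
      case True
      then have vu: "v = unitV 0" using v by (simp add: histos_def)
      have "tailV (unitV 0) j \<le> 1" for j
      proof -
        have "{j'. j \<le> j' \<and> unitV 0 j' \<noteq> 0} = (if j = 0 then {0} else {})"
          by (auto simp: unitV_def)
        then show ?thesis by (simp add: tailV_def unitV_def)
      qed
      then show ?thesis using vu C1 \<open>1 \<le> n'\<close> by (auto simp: unitV_def intro: order.trans)
    next
      case False
      then obtain W b where vh: "v = histo n' (act_patterns n n' (relu_layer n n' W b))"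
        using v by (auto simp: histos_def RL_def)
      then have vp: "v = histo n' (pats {..<n} n' W b)" by (simp add: act_patterns_eq)
      have "tailV v j \<le> ?C n n'" for j
      proof -
        have "tailV v j \<le> card (pats {..<n} n' W b)" unfolding vp by (rule tail_histo_le[OF pats_finite])
        also have "\<dots> \<le> ?C n n'" using pats_card[of "{..<n}" n' W b] by simp
        finally show ?thesis .
      qed
      then show ?thesis using histo_zero vp by auto
    qed
    have A1: "\<forall>v\<in>histos n n'. \<forall>j>n'. v j = 0" using props by blast
    have A2: "\<forall>v\<in>histos n n'. \<forall>j. tailV v j \<le> ?C n n'" using props by blast
    show ?thesis unfolding precV_def tail_gamma
      using maxV_bound[OF ne A1 A2] by blast
  qed
  have c3: "precV (\<lambda>j. ?C n n' * unitV n' j) (\<lambda>j. ?C m n' * unitV n' j)" if "n \<le> m" for n m n'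
  proof -
    have "?C n n' \<le> ?C m n'" by (rule sum_mono2) (use that in auto)
    then show ?thesis unfolding precV_def tail_gamma by auto
  qed
  show ?thesis unfolding in_Gamma_def
    apply (intro conjI allI impI)
      apply (rule c1)
     apply (rule c2; simp)
    apply (rule c3; simp)
    done
qed

end
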